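(* Let $I\subset F$ be a two-sided ideal generated by finitely many monomials, with $d$ the maximal degree of a finite monomial basis of $I$, and $A=F/I$. Let $M=\langle e_i\bar w_{ij}\rangle\subset\bigoplus_{i=1}^rA[-\delta_i]$ be a finitely generated monomial right submodule, where $\bar w_{ij}=w_{ij}+I$ with $w_{ij}\in W\setminus I$, let $\Delta_{ij}=\delta_i+\deg w_{ij}$, $\Delta=\max\Delta_{ij}$, and $\varphi:\bigoplus_{i,j}A[-\Delta_{ij}]\to\bigoplus_iA[-\delta_i]$, $\epsilon_{ij}\mapsto e_i\bar w_{ij}$. Then the right syzygy module $K=\mathrm{Ker}\,\varphi$ is finitely generated and monomial (generated by elements $\epsilon_{ij}(u+I)$ with $u\in W$), and the maximal degree of an element of a minimal monomial basis of $K$ is at most $\Delta+d-1$.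
   Context: $\mathbb K$ is a field, $F=\mathbb K\langle x_1,\dots,x_n\rangle$ the free associative algebra with standard grading, $W$ its set of monomials. $A[-\delta]_e=A_{e-\delta}$; $\bigoplus_iA[-\delta_i]$ is the graded free right $A$-module with basis $e_i$ of degree $\delta_i$, and $\bigoplus_{i,j}A[-\Delta_{ij}]$ the graded free right $A$-module with basis $\epsilon_{ij}$ of degree $\Delta_{ij}$. *)

theory Defs
  imports Main "HOL-Library.Sublist"
begin

text \<open>Monomials of F = K<x_1,...,x_n> are words over a finite alphabet 'x.
  Noncommutative polynomials are finitely supported functions word => 'k.\<close>

definition inI :: "'x list set \<Rightarrow> 'x list \<Rightarrow> bool" where
  "inI G w \<longleftrightarrow> (\<exists>g\<in>G. sublist g w)"

definition monomial_basis :: "'x list set \<Rightarrow> bool" where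
  "monomial_basis G \<longleftrightarrow> finite G \<and>
     (\<forall>g\<in>G. \<forall>h\<in>G. sublist g h \<longrightarrow> g = h)"

text \<open>Elements of A = F/I, represented in the basis of normal words (W minus I).\<close>
definition inA :: "'x list set \<Rightarrow> ('x list \<Rightarrow> 'k::zero) \<Rightarrow> bool" where
  "inA G a \<longleftrightarrow> finite {w. a w \<noteq> 0} \<and> (\<forall>w. inI G w \<longrightarrow> a w = 0)"

text \<open>Elements of the free right A-module with basis indexed by J, written in the
  K-basis eps_b (u+I), u a normal word.\<close>
definition fmod :: "'x list set \<Rightarrow> 'b set \<Rightarrow> ('b \<times> 'x list \<Rightarrow> 'k::zero) \<Rightarrow> bool" where
  "fmod G J f \<longleftrightarrow> finite {p. f p \<noteq> 0} \<and>
     (\<forall>b u. f (b, u) \<noteq> 0 \<longrightarrow> b \<in> J \<and> \<not> inI G u)"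

definition rmul :: "'x list set \<Rightarrow> ('b \<times> 'x list \<Rightarrow> 'k::comm_semiring_1)
     \<Rightarrow> ('x list \<Rightarrow> 'k) \<Rightarrow> ('b \<times> 'x list \<Rightarrow> 'k)" where
  "rmul G f a = (\<lambda>(b, w). if inI G w then 0
      else (\<Sum>k\<le>length w. f (b, take k w) * a (drop k w)))"

inductive_set rsub :: "'x list set \<Rightarrow> ('b \<times> 'x list \<Rightarrow> 'k::comm_semiring_1) set
     \<Rightarrow> ('b \<times> 'x list \<Rightarrow> 'k) set"
  for G :: "'x list set" and S :: "('b \<times> 'x list \<Rightarrow> 'k) set" where
  zero: "(\<lambda>_. 0) \<in> rsub G S"
| gen: "s \<in> S \<Longrightarrow> s \<in> rsub G S"
| add: "f \<in> rsub G S \<Longrightarrow> g \<in> rsub G S \<Longrightarrow> (\<lambda>p. f p + g p) \<in> rsub G S"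
| mul: "f \<in> rsub G S \<Longrightarrow> inA G a \<Longrightarrow> rmul G f a \<in> rsub G S"

definition mono :: "'b \<Rightarrow> 'x list \<Rightarrow> ('b \<times> 'x list \<Rightarrow> 'k::zero_neq_one)" where
  "mono b u = (\<lambda>p. if p = (b, u) then 1 else 0)"

text \<open>The map phi : eps_b |-> e_{fst b} (wg b + I), from the free module with basis
  indexed by J to the free module with basis e_1..e_r.\<close>
definition phi :: "'x list set \<Rightarrow> (nat \<times> nat) set \<Rightarrow> (nat \<times> nat \<Rightarrow> 'x list)
     \<Rightarrow> ((nat \<times> nat) \<times> 'x list \<Rightarrow> 'k::comm_monoid_add) \<Rightarrow> (nat \<times> 'x list \<Rightarrow> 'k)" where
  "phi G J wg f = (\<lambda>(i, w). if inI G w then 0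
      else (\<Sum>b\<in>{b\<in>J. fst b = i \<and> prefix (wg b) w}. f (b, drop (length (wg b)) w)))"

definition syz :: "'x list set \<Rightarrow> (nat \<times> nat) set \<Rightarrow> (nat \<times> nat \<Rightarrow> 'x list)
     \<Rightarrow> ((nat \<times> nat) \<times> 'x list \<Rightarrow> 'k::comm_monoid_add) set" where
  "syz G J wg = {f. fmod G J f \<and> phi G J wg f = (\<lambda>_. 0)}"

definition Deg :: "(nat \<Rightarrow> int) \<Rightarrow> (nat \<times> nat \<Rightarrow> 'x list) \<Rightarrow> nat \<times> nat \<Rightarrow> int" where
  "Deg \<delta> wg b = \<delta> (fst b) + int (length (wg b))"

end

theory Submission
  imports Defs
begin


lemma inI_mono: "inI G w \<Longrightarrow> sublist w v \<Longrightarrow> inI G v"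
  unfolding inI_def by (meson sublist_order.dual_order.trans)

definition spanS :: "'x list set \<Rightarrow> ('b \<times> 'x list) set \<Rightarrow> ('b \<times> 'x list \<Rightarrow> 'k::zero) set" where
  "spanS G S = {f. finite {p. f p \<noteq> 0} \<and> (\<forall>b w. f (b,w) \<noteq> 0 \<longrightarrow> \<not> inI G w \<and> (\<exists>v. (b,v) \<in> S \<and> prefix v w))}"

lemma rmul_nz:
  assumes "rmul G f a (b,w) \<noteq> 0"
  shows "\<not> inI G w \<and> (\<exists>k\<le>length w. f (b, take k w) \<noteq> 0 \<and> a (drop k w) \<noteq> 0)"
proof -
  have ni: "\<not> inI G w" using assms unfolding rmul_def by auto
  hence "(\<Sum>k\<le>length w. f (b, take k w) * a (drop k w)) \<noteq> 0" using assms unfolding rmul_def by auto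
  then obtain k where "k \<in> {..length w}" "f (b, take k w) * a (drop k w) \<noteq> 0"
    using sum.not_neutral_contains_not_neutral by blast
  thus ?thesis using ni by auto
qed

lemma rsub_sub:
  fixes S :: "('b \<times> 'x list) set"
  assumes "f \<in> rsub G ((\<lambda>(b,u). mono b u) ` S)" "\<forall>(b,u)\<in>S. \<not> inI G u"
  shows "f \<in> (spanS G S :: ('b \<times> 'x list \<Rightarrow> 'k::field) set)"
  using assms(1)
proof (induction rule: rsub.induct)
  case zero
  then show ?case by (simp add: spanS_def)
next
  case (gen s)
  then obtain b u where s: "s = mono b u" "(b,u) \<in> S" by auto
  have fin: "finite {p. s p \<noteq> 0}" using s by (auto simp: mono_def)
  have nu: "\<not> inI G u" using s(2) assms(2) by auto
  show ?case unfolding spanS_def mem_Collect_eq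
  proof (rule conjI[OF fin], intro allI impI)
    fix b' w assume "s (b',w) \<noteq> 0"
    hence "b' = b" "w = u" using s(1) by (auto simp: mono_def split: if_splits)
    thus "\<not> inI G w \<and> (\<exists>v. (b',v) \<in> S \<and> prefix v w)" using nu s(2) by blast
  qed
next
  case (add f g)
  have "{p. f p + g p \<noteq> 0} \<subseteq> {p. f p \<noteq> 0} \<union> {p. g p \<noteq> 0}" by auto
  hence fin: "finite {p. f p + g p \<noteq> 0}" using add.IH by (auto simp: spanS_def intro: finite_subset)
  show ?case unfolding spanS_def mem_Collect_eq
  proof (rule conjI[OF fin], intro allI impI)
    fix b w assume "f (b,w) + g (b,w) \<noteq> 0"
    hence "f (b,w) \<noteq> 0 \<or> g (b,w) \<noteq> 0" by auto
    thus "\<not> inI G w \<and> (\<exists>v. (b,v) \<in> S \<and> prefix v w)" using add.IH unfolding spanS_def mem_Collect_eq by blast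
  qed
next
  case (mul f a)
  have sub: "{p. rmul G f a p \<noteq> 0} \<subseteq> (\<lambda>((b,x),y). (b, x@y)) ` ({p. f p \<noteq> 0} \<times> {y. a y \<noteq> 0})"
  proof
    fix p assume p0: "p \<in> {p. rmul G f a p \<noteq> 0}"
    obtain b w where p: "p = (b,w)" by (cases p)
    have "rmul G f a (b,w) \<noteq> 0" using p0 p by simp
    from rmul_nz[OF this] obtain k where "f (b, take k w) \<noteq> 0" "a (drop k w) \<noteq> 0" by blast
    hence mem: "((b, take k w), drop k w) \<in> {p. f p \<noteq> 0} \<times> {y. a y \<noteq> 0}" by simp
    have "p = (\<lambda>((b,x),y). (b, x@y)) ((b, take k w), drop k w)" using p by simp
    thus "p \<in> (\<lambda>((b,x),y). (b, x@y)) ` ({p. f p \<noteq> 0} \<times> {y. a y \<noteq> 0})"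
      using mem by (rule image_eqI)
  qed
  have "finite {p. f p \<noteq> 0}" using mul.IH unfolding spanS_def mem_Collect_eq by blast
  moreover have "finite {y. a y \<noteq> 0}" using mul.hyps(2) unfolding inA_def by blast
  ultimately have fin: "finite {p. rmul G f a p \<noteq> 0}"
    by (intro finite_subset[OF sub] finite_imageI finite_cartesian_product)
  show ?case unfolding spanS_def mem_Collect_eq
  proof (rule conjI[OF fin], intro allI impI)
    fix b w assume "rmul G f a (b,w) \<noteq> 0"
    from rmul_nz[OF this] obtain k where ni: "\<not> inI G w" and fk: "f (b, take k w) \<noteq> 0" by blast
    have "\<forall>b w. f (b,w) \<noteq> 0 \<longrightarrow> \<not> inI G w \<and> (\<exists>v. (b,v) \<in> S \<and> prefix v w)"
      using mul.IH unfolding spanS_def mem_Collect_eq by blast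
    then obtain v where "(b,v) \<in> S" and pv: "prefix v (take k w)" using fk by blast
    have "prefix v w" using prefix_order.trans[OF pv take_is_prefix] .
    thus "\<not> inI G w \<and> (\<exists>v. (b,v) \<in> S \<and> prefix v w)" using ni \<open>(b,v) \<in> S\<close> by blast
  qed
qed

lemma rsub_sum:
  assumes "finite A" "\<forall>p\<in>A. h p \<in> rsub G S"
  shows "(\<lambda>q. \<Sum>p\<in>A. h p q) \<in> rsub G S"
  using assms
proof (induction A rule: finite_induct)
  case empty
  then show ?case using rsub.zero by simp
next
  case (insert x F)
  have "(\<lambda>q. h x q + (\<Sum>p\<in>F. h p q)) \<in> rsub G S"
    using insert by (intro rsub.add) auto
  thus ?case using insert by simp
qed

lemma rmul_mono:
  fixes c :: "'k::field" and b :: 'b and v t :: "'x list"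
  assumes "\<not> inI G (v @ t)"
  shows "rmul G (mono b v) (\<lambda>s. if s = t then c else 0) = (\<lambda>q. if q = (b, v@t) then c else 0)"
proof
  fix q :: "'b \<times> 'x list"
  obtain b' w where q: "q = (b',w)" by (cases q)
  show "rmul G (mono b v) (\<lambda>s. if s = t then c else 0) q = (if q = (b, v@t) then c else 0)"
  proof (cases "inI G w")
    case True
    then show ?thesis using q assms by (auto simp: rmul_def)
  next
    case False
    have eq: "\<And>k. k \<in> {..length w} \<Longrightarrow> mono b v (b', take k w) * (if drop k w = t then c else 0)
        = (if k = length v then (if b' = b \<and> w = v @ t then c else 0) else 0)"
    proof -
      fix k assume k: "k \<in> {..length w}"
      show "mono b v (b', take k w) * (if drop k w = t then c else 0)
        = (if k = length v then (if b' = b \<and> w = v @ t then c else 0) else 0)"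
      proof (cases "take k w = v \<and> drop k w = t \<and> b' = b")
        case True
        hence "w = v @ t" by (metis append_take_drop_id)
        moreover have "k = length v" using True k by auto
        ultimately show ?thesis using True by (auto simp: mono_def)
      next
        case F: False
        show ?thesis
        proof (cases "k = length v \<and> b' = b \<and> w = v @ t")
          case True then show ?thesis using F by auto
        next
          case False
          have disj: "mono b v (b', take k w) = (0::'k) \<or> drop k w \<noteq> t" 
          proof (cases "drop k w = t")
            case True
            then have "take k w \<noteq> v \<or> b' \<noteq> b" using F by auto
            thus ?thesis by (auto simp: mono_def)
          qed simp
          have R: "(if k = length v then (if b' = b \<and> w = v @ t then c else 0) else 0) = 0"
            using False by auto
          have L: "mono b v (b', take k w) * (if drop k w = t then c else 0) = 0"
          proof (cases "drop k w = t")
            case True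
            with disj have "mono b v (b', take k w) = (0::'k)" by blast
            thus ?thesis by simp
          qed simp
          show ?thesis using L R by simp
        qed
      qed
    qed
    have "rmul G (mono b v) (\<lambda>s. if s = t then c else 0) q =
      (\<Sum>k\<le>length w. mono b v (b', take k w) * (if drop k w = t then c else 0))"
      using q False by (simp add: rmul_def)
    also have "\<dots> = (\<Sum>k\<le>length w. (if k = length v then (if b' = b \<and> w = v @ t then c else 0) else 0))"
      using eq by (rule sum.cong[OF refl])
    also have "\<dots> = (if q = (b, v@t) then c else 0)"
      using q by (auto simp: sum.delta)
    finally show ?thesis .
  qed
qed

lemma span_sub_rsub:
  fixes S :: "('b \<times> 'x list) set"
  assumes "f \<in> (spanS G S :: ('b \<times> 'x list \<Rightarrow> 'k::field) set)"
  shows "f \<in> rsub G ((\<lambda>(b,u). mono b u) ` S)"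
proof -
  let ?A = "{p. f p \<noteq> 0}"
  have fin: "finite ?A" using assms by (simp add: spanS_def)
  have "(\<lambda>q. \<Sum>p\<in>?A. (\<lambda>q. if q = p then f p else 0) q) \<in> rsub G ((\<lambda>(b,u). mono b u) ` S)"
  proof (rule rsub_sum[OF fin], intro ballI)
    fix p assume "p \<in> ?A"
    then obtain b w where p: "p = (b,w)" "f (b,w) \<noteq> 0" by (cases p) auto
    then obtain v where ni: "\<not> inI G w" and v: "(b,v) \<in> S" "prefix v w" using assms by (auto simp: spanS_def)
    then obtain t where w: "w = v @ t" by (auto simp: prefix_def)
    have gen: "mono b v \<in> rsub G ((\<lambda>(b,u). mono b u) ` S)" using v by (auto intro!: rsub.gen)
    have "inA G (\<lambda>s. if s = t then f (b,w) else 0)"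
    proof -
      have "\<not> inI G t" using ni w inI_mono[of G t "v @ t"] by auto
      moreover have "{s. (if s = t then f (b,w) else 0) \<noteq> 0} \<subseteq> {t}" by auto
      ultimately show ?thesis unfolding inA_def by (auto intro: finite_subset)
    qed
    hence "rmul G (mono b v) (\<lambda>s. if s = t then f (b,w) else 0) \<in> rsub G ((\<lambda>(b,u). mono b u) ` S)"
      by (rule rsub.mul[OF gen])
    moreover have "rmul G (mono b v) (\<lambda>s. if s = t then f (b,w) else 0) = (\<lambda>q. if q = p then f p else 0)"
    proof -
      have ni': "\<not> inI G (v @ t)" using ni w by simp
      show ?thesis unfolding p w by (rule rmul_mono[OF ni'])
    qed
    ultimately show "(\<lambda>q. if q = p then f p else 0) \<in> rsub G ((\<lambda>(b,u). mono b u) ` S)" by simp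
  qed
  moreover have "(\<lambda>q. \<Sum>p\<in>?A. (\<lambda>q. if q = p then f p else 0) q) = f"
  proof
    fix q show "(\<Sum>p\<in>?A. (\<lambda>q. if q = p then f p else 0) q) = f q"
      using fin by (cases "f q = 0") (auto simp: sum.delta)
  qed
  ultimately show ?thesis by simp
qed

lemma rsub_eq:
  fixes S :: "('b \<times> 'x list) set"
  assumes "\<forall>(b,u)\<in>S. \<not> inI G u"
  shows "(rsub G ((\<lambda>(b,u). mono b u) ` S) :: ('b \<times> 'x list \<Rightarrow> 'k::field) set) = spanS G S"
  using rsub_sub[OF _ assms] span_sub_rsub by blast



lemma deg_bound:
  assumes "\<not> inI G wb" "\<not> inI G u" "inI G (wb @ u)" "u \<noteq> [] \<longrightarrow> \<not> inI G (wb @ butlast u)"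
  shows "\<exists>g\<in>G. length u < length g"
proof -
  obtain g where g: "g \<in> G" "sublist g (wb @ u)" using assms(3) unfolding inI_def by blast
  obtain ps ss where eq: "wb @ u = ps @ g @ ss" using g(2) unfolding sublist_def by blast
  have une: "u \<noteq> []" using assms(1,3) by auto
  have ss: "ss = []"
  proof (rule ccontr)
    assume sne: "ss \<noteq> []"
    have "butlast (wb @ u) = ps @ g @ butlast ss" using eq sne by (simp add: butlast_append)
    moreover have "butlast (wb @ u) = wb @ butlast u" using une by (simp add: butlast_append)
    ultimately have "sublist g (wb @ butlast u)" by (metis sublist_appendI)
    hence "inI G (wb @ butlast u)" using g(1) unfolding inI_def by blast
    thus False using assms(4) une by blast
  qed
  have "length u < length g"
  proof (rule ccontr)
    assume "\<not> length u < length g"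
    hence le: "length g \<le> length u" by simp
    have e2: "wb @ u = ps @ g" using eq ss by simp
    have "drop (length ps) (wb @ u) = g" using e2 by simp
    moreover have "length ps = length wb + (length u - length g)" using e2 le
      by (metis add_diff_cancel_right' length_append diff_add_assoc)
    ultimately have "g = drop (length u - length g) u" by simp
    hence "sublist g u" using suffix_drop suffix_imp_sublist by metis
    hence "inI G u" using g(1) unfolding inI_def by blast
    thus False using assms(2) by blast
  qed
  thus ?thesis using g(1) by blast
qed

theorem mainTheorem15:
  fixes G :: "('x::finite) list set"
    and r :: nat
    and J :: "(nat \<times> nat) set"
    and wg :: "nat \<times> nat \<Rightarrow> 'x list"
    and \<delta> :: "nat \<Rightarrow> int"
  assumes basisI: "monomial_basis G"
    and finJ: "finite J"
    and rows: "\<forall>b\<in>J. fst b \<in> {1..r}"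
    and normal: "\<forall>b\<in>J. \<not> inI G (wg b)"
    and minM: "\<forall>b\<in>J. \<forall>b'\<in>J. b \<noteq> b' \<and> fst b = fst b' \<longrightarrow> \<not> prefix (wg b) (wg b')"
  defines "d \<equiv> int (Max (length ` G))"
    and "\<Delta> \<equiv> Max (Deg \<delta> wg ` J)"
    and "K \<equiv> (syz G J wg :: ((nat \<times> nat) \<times> 'x list \<Rightarrow> 'k::field) set)"
  shows "(\<exists>S. finite S \<and> (\<forall>(b, u)\<in>S. b \<in> J \<and> \<not> inI G u)
              \<and> K = rsub G ((\<lambda>(b, u). mono b u) ` S))
       \<and> (\<forall>S. (\<forall>(b, u)\<in>S. b \<in> J \<and> \<not> inI G u)
              \<and> K = rsub G ((\<lambda>(b, u). mono b u) ` S)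
              \<and> (\<forall>S'. S' \<subset> S \<longrightarrow> K \<noteq> rsub G ((\<lambda>(b, u). mono b u) ` S'))
            \<longrightarrow> (\<forall>(b, u)\<in>S. Deg \<delta> wg b + int (length u) \<le> \<Delta> + d - 1))"
proof -
  have finG: "finite G" using basisI by (simp add: monomial_basis_def)
  have Kchar: "f \<in> K \<longleftrightarrow> fmod G J f \<and> (\<forall>b t. f (b,t) \<noteq> 0 \<longrightarrow> inI G (wg b @ t))" for f
  proof
    assume fK: "f \<in> K"
    hence fm: "fmod G J f" and ph: "phi G J wg f = (\<lambda>_. 0)" by (auto simp: K_def syz_def)
    show "fmod G J f \<and> (\<forall>b t. f (b,t) \<noteq> 0 \<longrightarrow> inI G (wg b @ t))"
    proof (rule conjI[OF fm], intro allI impI)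
      fix b t assume nz: "f (b,t) \<noteq> 0"
      have bJ: "b \<in> J" using fm nz unfolding fmod_def by blast
      show "inI G (wg b @ t)"
      proof (rule ccontr)
        assume ni: "\<not> inI G (wg b @ t)"
        have Bset: "{b'\<in>J. fst b' = fst b \<and> prefix (wg b') (wg b @ t)} = {b}"
        proof (rule set_eqI, rule iffI)
          fix b' assume "b' \<in> {b'\<in>J. fst b' = fst b \<and> prefix (wg b') (wg b @ t)}"
          hence b': "b' \<in> J" "fst b' = fst b" "prefix (wg b') (wg b @ t)" by auto
          have "prefix (wg b) (wg b @ t)" by simp
          hence "prefix (wg b') (wg b) \<or> prefix (wg b) (wg b')" using b'(3) prefix_same_cases by blast
          moreover have "b' \<noteq> b \<Longrightarrow> \<not> prefix (wg b') (wg b)" using minM b' bJ by blast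
          moreover have "b' \<noteq> b \<Longrightarrow> \<not> prefix (wg b) (wg b')" using minM b' bJ by metis
          ultimately show "b' \<in> {b}" by blast
        next
          fix b' assume "b' \<in> {b}" thus "b' \<in> {b'\<in>J. fst b' = fst b \<and> prefix (wg b') (wg b @ t)}"
            using bJ by simp
        qed
        have "phi G J wg f (fst b, wg b @ t) = f (b, t)" unfolding phi_def using ni Bset by simp
        moreover have "phi G J wg f (fst b, wg b @ t) = 0" using ph by simp
        ultimately show False using nz by simp
      qed
    qed
  next
    assume H: "fmod G J f \<and> (\<forall>b t. f (b,t) \<noteq> 0 \<longrightarrow> inI G (wg b @ t))"
    have "phi G J wg f = (\<lambda>_. 0)"
    proof
      fix q :: "nat \<times> 'x list"
      obtain i w where q: "q = (i,w)" by (cases q)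
      show "phi G J wg f q = 0"
      proof (cases "inI G w")
        case True thus ?thesis unfolding q phi_def by simp
      next
        case False
        have "\<forall>b\<in>{b\<in>J. fst b = i \<and> prefix (wg b) w}. f (b, drop (length (wg b)) w) = 0"
        proof
          fix b assume "b \<in> {b\<in>J. fst b = i \<and> prefix (wg b) w}"
          hence "prefix (wg b) w" by simp
          then obtain z where "w = wg b @ z" unfolding prefix_def by blast
          hence "wg b @ drop (length (wg b)) w = w" by simp
          thus "f (b, drop (length (wg b)) w) = 0" using H False by metis
        qed
        hence "(\<Sum>b\<in>{b\<in>J. fst b = i \<and> prefix (wg b) w}. f (b, drop (length (wg b)) w)) = 0"
          by (rule sum.neutral)
        thus ?thesis unfolding q phi_def using False by simp
      qed
    qed
    thus "f \<in> K" using H by (simp add: K_def syz_def)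
  qed
  have degJ: "Deg \<delta> wg b \<le> \<Delta>" if "b \<in> J" for b
    unfolding \<Delta>_def using finJ that by simp
  have dbound: "int (length u) \<le> d - 1" if ex: "\<exists>g\<in>G. length u < length g" for u
  proof -
    obtain g where "g \<in> G" "length u < length g" using ex by blast
    moreover have "length g \<le> Max (length ` G)" using finG \<open>g \<in> G\<close> by simp
    ultimately show ?thesis unfolding d_def by linarith
  qed
  define Mn where "Mn = {(b,t). b \<in> J \<and> \<not> inI G t \<and> inI G (wg b @ t)
      \<and> (\<forall>t'. strict_prefix t' t \<longrightarrow> \<not> inI G (wg b @ t'))}"
  have Mn_deg: "\<exists>g\<in>G. length t < length g" if "(b,t) \<in> Mn" for b t
  proof (rule deg_bound[of G "wg b"])
    show "\<not> inI G (wg b)" using that normal unfolding Mn_def by blast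
    show "\<not> inI G t" "inI G (wg b @ t)" using that unfolding Mn_def by blast+
    show "t \<noteq> [] \<longrightarrow> \<not> inI G (wg b @ butlast t)"
    proof
      assume "t \<noteq> []"
      hence "strict_prefix (butlast t) t" using prefixeq_butlast
        by (metis butlast_snoc length_butlast less_irrefl append_butlast_last_id diff_less length_greater_0_conv zero_less_one prefix_order.dual_order.not_eq_order_implies_strict)
      thus "\<not> inI G (wg b @ butlast t)" using that unfolding Mn_def by blast
    qed
  qed
  have finMn: "finite Mn"
  proof -
    have "Mn \<subseteq> J \<times> {xs. set xs \<subseteq> UNIV \<and> length xs \<le> Max (length ` G)}"
    proof
      fix p assume p: "p \<in> Mn"
      obtain b t where bt: "p = (b,t)" by (cases p)
      obtain g where "g \<in> G" "length t < length g" using Mn_deg p bt by blast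
      moreover have "length g \<le> Max (length ` G)" using finG \<open>g \<in> G\<close> by simp
      moreover have "b \<in> J" using p bt unfolding Mn_def by blast
      ultimately show "p \<in> J \<times> {xs. set xs \<subseteq> UNIV \<and> length xs \<le> Max (length ` G)}" using bt by simp
    qed
    moreover have "finite (J \<times> {xs. set xs \<subseteq> (UNIV::'x set) \<and> length xs \<le> Max (length ` G)})"
      using finJ finite_lists_length_le[OF finite_UNIV] by blast
    ultimately show ?thesis by (rule finite_subset)
  qed
  have Mn_ok: "\<forall>(b, u)\<in>Mn. b \<in> J \<and> \<not> inI G u" unfolding Mn_def by blast
  have KMn: "K = spanS G Mn"
  proof (rule set_eqI, rule iffI)
    fix f assume "f \<in> K"
    hence fm: "fmod G J f" and kk: "\<forall>b t. f (b,t) \<noteq> 0 \<longrightarrow> inI G (wg b @ t)" using Kchar by blast+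
    show "f \<in> spanS G Mn" unfolding spanS_def mem_Collect_eq
    proof (intro conjI allI impI)
      show "finite {p. f p \<noteq> 0}" using fm unfolding fmod_def by blast
    next
      fix b w assume nz: "f (b,w) \<noteq> 0"
      have bJ: "b \<in> J" and nw: "\<not> inI G w" using fm nz unfolding fmod_def by blast+
      have iw: "inI G (wg b @ w)" using kk nz by blast
      define n where "n = (LEAST n. inI G (wg b @ take n w))"
      have ex: "inI G (wg b @ take (length w) w)" using iw by simp
      have In: "inI G (wg b @ take n w)" unfolding n_def using ex by (rule LeastI)
      have nle: "n \<le> length w" unfolding n_def using ex by (rule Least_le)
      have mem: "(b, take n w) \<in> Mn" unfolding Mn_def
      proof (clarsimp simp only: mem_Collect_eq case_prod_conv, intro conjI allI impI)
        show "b \<in> J" by fact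
        show "inI G (wg b @ take n w)" by fact
        show "\<not> inI G (take n w)" using nw inI_mono[of G "take n w" w] prefix_imp_sublist[OF take_is_prefix] by blast
      next
        fix t' assume sp: "strict_prefix t' (take n w)"
        hence "prefix t' w" using take_is_prefix prefix_order.trans by (metis strict_prefix_def)
        hence t'eq: "t' = take (length t') w" by (metis append_eq_conv_conj prefix_def)
        have "length t' < length (take n w)" by (rule prefix_length_less[OF sp])
        hence "length t' < n" using nle by simp
        hence "\<not> inI G (wg b @ take (length t') w)" unfolding n_def by (rule not_less_Least)
        thus "\<not> inI G (wg b @ t')" using t'eq by simp
      qed
      show "\<not> inI G w" by fact
      show "\<exists>v. (b, v) \<in> Mn \<and> prefix v w" using mem take_is_prefix by blast
    qed
  next
    fix f :: "(nat \<times> nat) \<times> 'x list \<Rightarrow> 'k" assume fs: "f \<in> spanS G Mn"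
    hence fin: "finite {p. f p \<noteq> 0}" and
      sp: "\<forall>b w. f (b,w) \<noteq> 0 \<longrightarrow> \<not> inI G w \<and> (\<exists>v. (b,v) \<in> Mn \<and> prefix v w)"
      unfolding spanS_def by blast+
    have "fmod G J f" unfolding fmod_def
    proof (rule conjI[OF fin], intro allI impI)
      fix b u assume "f (b,u) \<noteq> 0"
      thus "b \<in> J \<and> \<not> inI G u" using sp unfolding Mn_def by blast
    qed
    moreover have "\<forall>b t. f (b,t) \<noteq> 0 \<longrightarrow> inI G (wg b @ t)"
    proof (intro allI impI)
      fix b t assume "f (b,t) \<noteq> 0"
      then obtain v where v: "(b,v) \<in> Mn" "prefix v t" using sp by blast
      hence "inI G (wg b @ v)" unfolding Mn_def by blast
      moreover have "sublist (wg b @ v) (wg b @ t)" using v(2) by (auto simp: prefix_def)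
      ultimately show "inI G (wg b @ t)" by (rule inI_mono)
    qed
    ultimately show "f \<in> K" using Kchar by blast
  qed
  have part1: "\<exists>S. finite S \<and> (\<forall>(b, u)\<in>S. b \<in> J \<and> \<not> inI G u)
              \<and> K = rsub G ((\<lambda>(b, u). mono b u) ` S)"
  proof (intro exI conjI)
    show "finite Mn" by fact
    show "\<forall>(b, u)\<in>Mn. b \<in> J \<and> \<not> inI G u" by fact
    have "\<forall>(b, u)\<in>Mn. \<not> inI G u" using Mn_ok by blast
    thus "K = rsub G ((\<lambda>(b, u). mono b u) ` Mn)" using KMn rsub_eq by metis
  qed
  have part2: "\<forall>S. (\<forall>(b, u)\<in>S. b \<in> J \<and> \<not> inI G u)
              \<and> K = rsub G ((\<lambda>(b, u). mono b u) ` S)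
              \<and> (\<forall>S'. S' \<subset> S \<longrightarrow> K \<noteq> rsub G ((\<lambda>(b, u). mono b u) ` S'))
            \<longrightarrow> (\<forall>(b, u)\<in>S. Deg \<delta> wg b + int (length u) \<le> \<Delta> + d - 1)"
  proof (intro allI impI)
    fix S :: "((nat \<times> nat) \<times> 'x list) set"
    assume H: "(\<forall>(b, u)\<in>S. b \<in> J \<and> \<not> inI G u)
              \<and> K = rsub G ((\<lambda>(b, u). mono b u) ` S)
              \<and> (\<forall>S'. S' \<subset> S \<longrightarrow> K \<noteq> rsub G ((\<lambda>(b, u). mono b u) ` S'))"
    have Sok: "\<forall>(b, u)\<in>S. b \<in> J \<and> \<not> inI G u" using H by blast
    have Sni: "\<forall>(b, u)\<in>S. \<not> inI G u" using Sok by blast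
    have KS: "K = rsub G ((\<lambda>(b, u). mono b u) ` S)" using H by blast
    have minS: "\<forall>S'. S' \<subset> S \<longrightarrow> K \<noteq> rsub G ((\<lambda>(b, u). mono b u) ` S')" using H by blast
    have KS2: "K = spanS G S" using KS rsub_eq[OF Sni] by simp
    show "\<forall>(b, u)\<in>S. Deg \<delta> wg b + int (length u) \<le> \<Delta> + d - 1"
    proof (intro ballI, clarify)
      fix b u assume bu: "(b,u) \<in> S"
      have bJ: "b \<in> J" and nu: "\<not> inI G u" using Sok bu by auto
      have "mono b u = (\<lambda>(b, u). mono b u) (b,u)" by simp
      hence "mono b u \<in> (\<lambda>(b, u). mono b u) ` S" using bu by (rule image_eqI)
      hence "mono b u \<in> K" unfolding KS by (rule rsub.gen)
      moreover have "(mono b u :: (nat \<times> nat) \<times> 'x list \<Rightarrow> 'k) (b,u) \<noteq> 0" by (simp add: mono_def)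
      ultimately have iu: "inI G (wg b @ u)" using Kchar by blast
      have nb: "u \<noteq> [] \<longrightarrow> \<not> inI G (wg b @ butlast u)"
      proof
        assume une: "u \<noteq> []"
        show "\<not> inI G (wg b @ butlast u)"
        proof
          assume ib: "inI G (wg b @ butlast u)"
          have nbu: "\<not> inI G (butlast u)"
            using nu inI_mono[of G "butlast u" u] prefix_imp_sublist[OF prefixeq_butlast] by blast
          let ?m = "mono b (butlast u) :: (nat \<times> nat) \<times> 'x list \<Rightarrow> 'k"
          have supp: "?m p \<noteq> 0 \<longleftrightarrow> p = (b, butlast u)" for p by (simp add: mono_def)
          have "{p. ?m p \<noteq> 0} = {(b, butlast u)}" using supp by blast
          hence finm: "finite {p. ?m p \<noteq> 0}" by simp
          have "fmod G J ?m" unfolding fmod_def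
          proof (rule conjI[OF finm], intro allI impI)
            fix b' u' assume "?m (b',u') \<noteq> 0"
            hence "b' = b" "u' = butlast u" using supp by auto
            thus "b' \<in> J \<and> \<not> inI G u'" using bJ nbu by simp
          qed
          moreover have "\<forall>b' t. ?m (b',t) \<noteq> 0 \<longrightarrow> inI G (wg b' @ t)"
          proof (intro allI impI)
            fix b' t assume "?m (b',t) \<noteq> 0"
            hence "b' = b" "t = butlast u" using supp by auto
            thus "inI G (wg b' @ t)" using ib by simp
          qed
          ultimately have "?m \<in> K" using Kchar by blast
          hence "?m \<in> spanS G S" using KS2 by simp
          moreover have "?m (b, butlast u) \<noteq> 0" using supp by simp
          ultimately obtain v where v: "(b,v) \<in> S" "prefix v (butlast u)"
            unfolding spanS_def by blast
          have lv: "length v \<le> length u - 1" using prefix_length_le[OF v(2)] by simp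
          have lu: "length u > 0" using une by simp
          have vne: "v \<noteq> u"
          proof
            assume vu: "v = u"
            have "length u \<le> length u - 1" using lv unfolding vu .
            thus False using lu by linarith
          qed
          have pu: "prefix (butlast u) u" by (rule prefixeq_butlast)
          let ?S' = "S - {(b,u)}"
          have sub: "?S' \<subset> S" using bu by blast
          have key: "(\<exists>v0. (b0,v0) \<in> S \<and> prefix v0 w) \<longleftrightarrow> (\<exists>v0. (b0,v0) \<in> ?S' \<and> prefix v0 w)" for b0 w
          proof
            assume "\<exists>v0. (b0,v0) \<in> S \<and> prefix v0 w"
            then obtain v0 where v0: "(b0,v0) \<in> S" "prefix v0 w" by blast
            show "\<exists>v0. (b0,v0) \<in> ?S' \<and> prefix v0 w"
            proof (cases "(b0,v0) = (b,u)")
              case True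
              hence "prefix v w" using v(2) pu v0(2) prefix_order.trans by blast
              moreover have "(b0,v) \<in> ?S'" using True v(1) vne by auto
              ultimately show ?thesis by blast
            next
              case False thus ?thesis using v0 by blast
            qed
          next
            assume "\<exists>v0. (b0,v0) \<in> ?S' \<and> prefix v0 w"
            thus "\<exists>v0. (b0,v0) \<in> S \<and> prefix v0 w" by blast
          qed
          have "spanS G ?S' = (spanS G S :: ((nat \<times> nat) \<times> 'x list \<Rightarrow> 'k) set)"
            unfolding spanS_def by (simp only: key)
          moreover have "\<forall>(b, u)\<in>?S'. \<not> inI G u" using Sni by blast
          ultimately have "K = rsub G ((\<lambda>(b, u). mono b u) ` ?S')" using KS2 rsub_eq by metis
          thus False using minS sub by blast
        qed
      qed
      have "\<exists>g\<in>G. length u < length g"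
        using deg_bound[of G "wg b" u] normal bJ nu iu nb by blast
      hence "int (length u) \<le> d - 1" by (rule dbound)
      thus "Deg \<delta> wg b + int (length u) \<le> \<Delta> + d - 1" using degJ[OF bJ] by linarith
    qed
  qed
  show ?thesis using part1 part2 by blast
qed

end
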